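(* Let $m\in\mathbb{Z}_{>0}\cup\{\infty\}$, $n\ge1$, let $\tilde W$ be the subalgebra of $H(m,1,n)$ generated by $\tau,\tau^{-1},\sigma_1,\dots,\sigma_{n-2}$, and let $\epsilon=\pm1$. For $j\in\{0,\dots,n-1\}$, $\alpha\in\mathfrak{E}_m$ and $w\in\tilde W$, the element $\sigma_j^{\epsilon}\sigma_{j-1}^{\epsilon}\cdots\sigma_1^{\epsilon}\tau^{\alpha}\sigma_1\sigma_2\cdots\sigma_{n-1}w$ equals $\sigma_j^{-\epsilon}\sigma_{j-1}^{-\epsilon}\cdots\sigma_1^{-\epsilon}\tau^{\alpha}\sigma_1\sigma_2\cdots\sigma_{n-1}w$ plus an $\mathcal{A}_m$-linear combination of elements $\sigma_k^{-\epsilon}\sigma_{k-1}^{-\epsilon}\cdots\sigma_1^{-\epsilon}\tau^{\alpha}\sigma_1\sigma_2\cdots\sigma_{n-1}w_k$ with $k<j$ and $w_k\in\tilde W$.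
   Context: $\mathcal{A}_m:=\mathbb{C}[q^{\pm1},v_1^{\pm1},\dots,v_m^{\pm1}]$ for finite $m$, $\mathcal{A}_\infty:=\mathbb{C}[q,q^{-1}]$; $\mathfrak{E}_m:=\{0,\dots,m-1\}$ for finite $m$, $\mathfrak{E}_\infty:=\mathbb{Z}$. $H(m,1,n)$ is the $\mathcal{A}_m$-algebra generated by $\tau,\tau^{-1},\sigma_1,\dots,\sigma_{n-1}$ subject to $\tau\tau^{-1}=\tau^{-1}\tau=1$, $\sigma_i\sigma_{i+1}\sigma_i=\sigma_{i+1}\sigma_i\sigma_{i+1}$, $\sigma_i\sigma_j=\sigma_j\sigma_i$ ($|i-j|>1$), $\tau\sigma_1\tau\sigma_1=\sigma_1\tau\sigma_1\tau$, $\tau\sigma_i=\sigma_i\tau$ ($i>1$), $\sigma_i^2=(q-q^{-1})\sigma_i+1$, and $(\tau-v_1)\cdots(\tau-v_m)=0$ if $m<\infty$. Empty products equal $1$. *)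

theory Defs
  imports Complex_Main "HOL-Library.Extended_Nat"
begin

text \<open>The Hecke algebra H(m,1,n) is the universal A_m-algebra on generators
tau, tau^-1, sigma_1..sigma_(n-1) subject to the defining relations.  A statement
of the form "X = Y + (A_m-linear combination of elements of a given shape)" holds
in H(m,1,n) iff it holds for every A_m-algebra R and every family of elements of R
satisfying the defining relations.  An A_m-algebra structure on a ring R is a ring
map A_m -> centre(R), i.e. a C-algebra structure cs together with invertible central
elements q (inverse qi) and v_i (inverse vi_i), 1 <= i <= m.\<close>

definition vidx :: "enat \<Rightarrow> nat \<Rightarrow> bool" where
  "vidx m i = (case m of enat k \<Rightarrow> 1 \<le> i \<and> i \<le> k | \<infinity> \<Rightarrow> False)"

definition Eset :: "enat \<Rightarrow> int set" where
  "Eset m = (case m of enat k \<Rightarrow> {0..int k - 1} | \<infinity> \<Rightarrow> UNIV)"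

definition tpow :: "'a::ring_1 \<Rightarrow> 'a \<Rightarrow> int \<Rightarrow> 'a" where
  "tpow t ti a = (if 0 \<le> a then t ^ nat a else ti ^ nat (- a))"

definition desc_prod :: "(nat \<Rightarrow> 'a::monoid_mult) \<Rightarrow> nat \<Rightarrow> 'a" where
  "desc_prod f j = prod_list (map f (rev [1..<Suc j]))"

definition asc_prod :: "(nat \<Rightarrow> 'a::monoid_mult) \<Rightarrow> nat \<Rightarrow> 'a" where
  "asc_prod f k = prod_list (map f [1..<k])"

definition hecke_rels ::
  "enat \<Rightarrow> nat \<Rightarrow> (complex \<Rightarrow> 'a::ring_1) \<Rightarrow> 'a \<Rightarrow> 'a \<Rightarrow> (nat \<Rightarrow> 'a) \<Rightarrow> (nat \<Rightarrow> 'a)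
     \<Rightarrow> 'a \<Rightarrow> 'a \<Rightarrow> (nat \<Rightarrow> 'a) \<Rightarrow> (nat \<Rightarrow> 'a) \<Rightarrow> bool" where
  "hecke_rels m n cs q qi v vi tau taui sigma sigmai \<longleftrightarrow>
     \<comment> \<open>A_m-algebra structure: ring map into the centre\<close>
     cs 1 = 1 \<and> (\<forall>a b. cs (a + b) = cs a + cs b) \<and> (\<forall>a b. cs (a * b) = cs a * cs b) \<and>
     (\<forall>c x. cs c * x = x * cs c) \<and>
     (\<forall>x. q * x = x * q) \<and> (\<forall>x. qi * x = x * qi) \<and> q * qi = 1 \<and> qi * q = 1 \<and>
     (\<forall>i. vidx m i \<longrightarrow> (\<forall>x. v i * x = x * v i) \<and> (\<forall>x. vi i * x = x * vi i)
            \<and> v i * vi i = 1 \<and> vi i * v i = 1) \<and>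
     \<comment> \<open>inverses\<close>
     tau * taui = 1 \<and> taui * tau = 1 \<and>
     (\<forall>i. 1 \<le> i \<and> i < n \<longrightarrow> sigma i * sigmai i = 1 \<and> sigmai i * sigma i = 1) \<and>
     \<comment> \<open>braid relations\<close>
     (\<forall>i. 1 \<le> i \<and> i + 1 < n \<longrightarrow>
          sigma i * sigma (i+1) * sigma i = sigma (i+1) * sigma i * sigma (i+1)) \<and>
     (\<forall>i j. 1 \<le> i \<and> i < n \<and> 1 \<le> j \<and> j < n \<and> (i + 1 < j \<or> j + 1 < i) \<longrightarrow>
          sigma i * sigma j = sigma j * sigma i) \<and>
     (1 < n \<longrightarrow> tau * sigma 1 * tau * sigma 1 = sigma 1 * tau * sigma 1 * tau) \<and>
     (\<forall>i. 1 < i \<and> i < n \<longrightarrow> tau * sigma i = sigma i * tau) \<and>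
     \<comment> \<open>quadratic relations\<close>
     (\<forall>i. 1 \<le> i \<and> i < n \<longrightarrow> sigma i * sigma i = (q - qi) * sigma i + 1) \<and>
     \<comment> \<open>cyclotomic relation\<close>
     (\<forall>k. m = enat k \<longrightarrow> prod_list (map (\<lambda>i. tau - v i) [1..<Suc k]) = 0)"

text \<open>The image of A_m in R: subring generated by cs(C), q^(+-1), v_i^(+-1).\<close>
inductive_set scalars ::
  "enat \<Rightarrow> (complex \<Rightarrow> 'a::ring_1) \<Rightarrow> 'a \<Rightarrow> 'a \<Rightarrow> (nat \<Rightarrow> 'a) \<Rightarrow> (nat \<Rightarrow> 'a) \<Rightarrow> 'a set"
  for m cs q qi v vi where
    sc_c: "cs c \<in> scalars m cs q qi v vi"
  | sc_q: "q \<in> scalars m cs q qi v vi"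
  | sc_qi: "qi \<in> scalars m cs q qi v vi"
  | sc_v: "vidx m i \<Longrightarrow> v i \<in> scalars m cs q qi v vi"
  | sc_vi: "vidx m i \<Longrightarrow> vi i \<in> scalars m cs q qi v vi"
  | sc_add: "a \<in> scalars m cs q qi v vi \<Longrightarrow> b \<in> scalars m cs q qi v vi \<Longrightarrow> a + b \<in> scalars m cs q qi v vi"
  | sc_mult: "a \<in> scalars m cs q qi v vi \<Longrightarrow> b \<in> scalars m cs q qi v vi \<Longrightarrow> a * b \<in> scalars m cs q qi v vi"

inductive_set Wtilde ::
  "enat \<Rightarrow> nat \<Rightarrow> (complex \<Rightarrow> 'a::ring_1) \<Rightarrow> 'a \<Rightarrow> 'a \<Rightarrow> (nat \<Rightarrow> 'a) \<Rightarrow> (nat \<Rightarrow> 'a)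
     \<Rightarrow> 'a \<Rightarrow> 'a \<Rightarrow> (nat \<Rightarrow> 'a) \<Rightarrow> 'a set"
  for m n cs q qi v vi tau taui sigma where
    W_sc: "a \<in> scalars m cs q qi v vi \<Longrightarrow> a \<in> Wtilde m n cs q qi v vi tau taui sigma"
  | W_tau: "tau \<in> Wtilde m n cs q qi v vi tau taui sigma"
  | W_taui: "taui \<in> Wtilde m n cs q qi v vi tau taui sigma"
  | W_sigma: "1 \<le> i \<Longrightarrow> i + 2 \<le> n \<Longrightarrow> sigma i \<in> Wtilde m n cs q qi v vi tau taui sigma"
  | W_add: "a \<in> Wtilde m n cs q qi v vi tau taui sigma \<Longrightarrow> b \<in> Wtilde m n cs q qi v vi tau taui sigma
              \<Longrightarrow> a + b \<in> Wtilde m n cs q qi v vi tau taui sigma"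
  | W_mult: "a \<in> Wtilde m n cs q qi v vi tau taui sigma \<Longrightarrow> b \<in> Wtilde m n cs q qi v vi tau taui sigma
              \<Longrightarrow> a * b \<in> Wtilde m n cs q qi v vi tau taui sigma"

definition spow :: "(nat \<Rightarrow> 'a) \<Rightarrow> (nat \<Rightarrow> 'a) \<Rightarrow> int \<Rightarrow> nat \<Rightarrow> 'a" where
  "spow sigma sigmai e i = (if e = 1 then sigma i else sigmai i)"

end

theory Submission
  imports Defs
begin

lemma sum_split_concat:
  fixes f :: "nat \<Rightarrow> 'a::comm_monoid_add"
  shows "(\<Sum>l<K1+K2. f l) = (\<Sum>l<K1. f l) + (\<Sum>l<K2. f (K1 + l))"
  by (induction K2) (simp_all add: add.assoc)

lemma commute_prod_list:
  fixes x :: "'a::monoid_mult"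
  assumes "\<forall>y\<in>set xs. x * y = y * x"
  shows "x * prod_list xs = prod_list xs * x"
  using assms
proof (induction xs)
  case Nil then show ?case by simp
next
  case (Cons a xs)
  have "x * prod_list (a # xs) = (x * a) * prod_list xs" by (simp add: mult.assoc)
  also have "\<dots> = a * (x * prod_list xs)" using Cons by (simp add: mult.assoc)
  also have "\<dots> = prod_list (a # xs) * x" using Cons by (simp add: mult.assoc)
  finally show ?case .
qed

lemma commute_power:
  fixes x :: "'a::monoid_mult"
  assumes "x * y = y * x"
  shows "x * y ^ k = y ^ k * x"
  using commute_prod_list[of "replicate k y" x] assms
  by (simp add: prod_list_replicate)

locale hk =
  fixes m :: enat and n :: nat and cs :: "complex \<Rightarrow> 'a::ring_1"
    and q qi tau taui :: 'a and v vi sigma sigmai :: "nat \<Rightarrow> 'a"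
  assumes H: "hecke_rels m n cs q qi v vi tau taui sigma sigmai"
begin

abbreviation "Sc \<equiv> scalars m cs q qi v vi"
abbreviation "W \<equiv> Wtilde m n cs q qi v vi tau taui sigma"
abbreviation "c0 \<equiv> q - qi"

lemma cs_neg1: "cs (-1) = -1"
proof -
  have "cs 0 = cs 0 + cs 0" using H unfolding hecke_rels_def by (metis add_0)
  hence z: "cs 0 = 0" by simp
  have "cs (-1 + 1) = cs (-1) + 1" using H unfolding hecke_rels_def by metis
  thus ?thesis using z by (simp add: eq_neg_iff_add_eq_0)
qed

lemma sc_central: "a \<in> Sc \<Longrightarrow> a * x = x * a"
proof (induction a arbitrary: x rule: scalars.induct)
  case (sc_c c) then show ?case using H unfolding hecke_rels_def by blast
next
  case sc_q then show ?case using H unfolding hecke_rels_def by blast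
next
  case sc_qi then show ?case using H unfolding hecke_rels_def by blast
next
  case (sc_v i) then show ?case using H unfolding hecke_rels_def by blast
next
  case (sc_vi i) then show ?case using H unfolding hecke_rels_def by blast
next
  case (sc_add a b) then show ?case by (simp add: algebra_simps)
next
  case (sc_mult a b) then show ?case by (metis mult.assoc)
qed

lemma one_Sc: "1 \<in> Sc"
  using scalars.sc_c[of cs 1 m q qi v vi] H unfolding hecke_rels_def by simp

lemma neg1_Sc: "-1 \<in> Sc"
  using scalars.sc_c[of cs "-1" m q qi v vi] cs_neg1 by simp

lemma c0_Sc: "c0 \<in> Sc"
proof -
  have "q + (-1) * qi \<in> Sc" by (intro scalars.intros neg1_Sc)
  thus ?thesis by simp
qed

lemma mc0_Sc: "- c0 \<in> Sc"
proof -
  have "(-1) * q + qi \<in> Sc" by (intro scalars.intros neg1_Sc)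
  thus ?thesis by simp
qed

lemma c0_central: "c0 * x = x * c0"
  using sc_central c0_Sc by blast

lemma sigmai_eq: "1 \<le> i \<Longrightarrow> i < n \<Longrightarrow> sigmai i = sigma i - c0"
proof -
  assume a: "1 \<le> i" "i < n"
  have inv: "sigma i * sigmai i = 1" "sigmai i * sigma i = 1"
    and quad: "sigma i * sigma i = c0 * sigma i + 1"
    using H a unfolding hecke_rels_def by auto
  have "sigma i = sigmai i * (sigma i * sigma i)" using inv by (simp add: mult.assoc[symmetric])
  also have "\<dots> = sigmai i * (c0 * sigma i) + sigmai i" using quad by (simp add: distrib_left)
  also have "sigmai i * (c0 * sigma i) = c0"
    by (metis mult.assoc c0_central inv(2) mult_1_right)
  finally have "sigma i = c0 + sigmai i" .
  thus ?thesis by (simp add: algebra_simps)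
qed

definition dd :: "int \<Rightarrow> 'a" where "dd d = (if d = 1 then 0 else c0)"

lemma dd_central: "dd d * x = x * dd d"
  unfolding dd_def using c0_central by simp

lemma spow_eq: "1 \<le> i \<Longrightarrow> i < n \<Longrightarrow> spow sigma sigmai d i = sigma i - dd d"
  unfolding spow_def dd_def using sigmai_eq by simp

lemma sigma_comm: "1 \<le> i \<Longrightarrow> i < n \<Longrightarrow> 1 \<le> j \<Longrightarrow> j < n \<Longrightarrow> i + 1 < j
   \<Longrightarrow> sigma i * sigma j = sigma j * sigma i"
  using H unfolding hecke_rels_def by blast

lemma spow_comm: "1 \<le> i \<Longrightarrow> i < n \<Longrightarrow> 1 \<le> j \<Longrightarrow> j < n \<Longrightarrow> i + 1 < j
   \<Longrightarrow> spow sigma sigmai d i * spow sigma sigmai d' j = spow sigma sigmai d' j * spow sigma sigmai d i"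
proof -
  assume a: "1 \<le> i" "i < n" "1 \<le> j" "j < n" "i + 1 < j"
  have c: "sigma i * sigma j = sigma j * sigma i" using sigma_comm a by blast
  show ?thesis unfolding spow_eq[OF a(1,2)] spow_eq[OF a(3,4)]
  proof -
    have e1: "sigma i * dd d' = dd d' * sigma i" "dd d * sigma j = sigma j * dd d"
      "dd d * dd d' = dd d' * dd d" using dd_central by metis+
    show "(sigma i - dd d) * (sigma j - dd d') = (sigma j - dd d') * (sigma i - dd d)"
      by (simp add: left_diff_distrib right_diff_distrib c e1 diff_diff_eq2 diff_add_eq add.commute)
  qed
qed

lemma sigma_tau: "1 < i \<Longrightarrow> i < n \<Longrightarrow> sigma i * tau = tau * sigma i"
  using H unfolding hecke_rels_def by metis

lemma sigma_taui: "1 < i \<Longrightarrow> i < n \<Longrightarrow> sigma i * taui = taui * sigma i"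
proof -
  assume a: "1 < i" "i < n"
  have t: "tau * taui = 1" "taui * tau = 1" using H unfolding hecke_rels_def by auto
  have "taui * sigma i = taui * sigma i * (tau * taui)" using t by simp
  also have "\<dots> = taui * (sigma i * tau) * taui" by (simp add: mult.assoc)
  also have "\<dots> = taui * (tau * sigma i) * taui" using sigma_tau a by simp
  also have "\<dots> = sigma i * taui" using t by (simp add: mult.assoc[symmetric])
  finally show ?thesis by simp
qed

lemma sigma_tpow: "1 < i \<Longrightarrow> i < n \<Longrightarrow> sigma i * tpow tau taui a = tpow tau taui a * sigma i"
  unfolding tpow_def using commute_power sigma_tau sigma_taui by auto

lemma upt_split3: "2 \<le> J \<Longrightarrow> J < n \<Longrightarrow>
   [1..<n] = [1..<J-1] @ [J-1, J] @ [Suc J..<n]"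
proof -
  assume a: "2 \<le> J" "J < n"
  have e: "n = (J - 1) + (n - (J - 1))" using a by simp
  have "[1..<n] = [1..<J-1] @ [J-1..<n]" using a upt_add_eq_append[of 1 "J-1" "n - (J-1)"]
    by (simp only: e[symmetric])
  moreover have "[J-1..<n] = (J-1) # [J..<n]" using a by (simp add: upt_conv_Cons)
  moreover have "[J..<n] = J # [Suc J..<n]" using a by (simp add: upt_conv_Cons)
  ultimately show ?thesis by simp
qed

lemma sigma_asc: "2 \<le> J \<Longrightarrow> J < n \<Longrightarrow> sigma J * asc_prod sigma n = asc_prod sigma n * sigma (J-1)"
proof -
  assume a: "2 \<le> J" "J < n"
  define P1 where "P1 = prod_list (map sigma [1..<J-1])"
  define P2 where "P2 = prod_list (map sigma [Suc J..<n])"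
  have A: "asc_prod sigma n = P1 * (sigma (J-1) * (sigma J * P2))"
    unfolding asc_prod_def P1_def P2_def upt_split3[OF a] by (simp add: mult.assoc)
  have cJ: "sigma J * sigma y = sigma y * sigma J" if "1 \<le> y" "y < J - 1" for y
    using sigma_comm[of y J] that a by simp
  have c1: "sigma J * P1 = P1 * sigma J" unfolding P1_def
    by (rule commute_prod_list) (use a in \<open>auto simp: cJ\<close>)
  have c2: "sigma (J-1) * P2 = P2 * sigma (J-1)" unfolding P2_def
    by (rule commute_prod_list) (use a sigma_comm in auto)
  have br: "sigma (J-1) * sigma J * sigma (J-1) = sigma J * sigma (J-1) * sigma J"
  proof -
    have b: "\<forall>i. 1 \<le> i \<and> i + 1 < n \<longrightarrow>
          sigma i * sigma (i+1) * sigma i = sigma (i+1) * sigma i * sigma (i+1)"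
      using H unfolding hecke_rels_def by blast
    have "1 \<le> J - 1" "J - 1 + 1 < n" "J - 1 + 1 = J" using a by auto
    thus ?thesis using b by metis
  qed
  have "sigma J * asc_prod sigma n = P1 * (sigma J * sigma (J-1) * sigma J) * P2"
    unfolding A by (simp add: mult.assoc[symmetric] c1) 
  also have "\<dots> = P1 * (sigma (J-1) * sigma J) * (sigma (J-1) * P2)"
    unfolding br[symmetric] by (simp add: mult.assoc)
  also have "\<dots> = asc_prod sigma n * sigma (J-1)"
    unfolding A c2 by (simp add: mult.assoc)
  finally show ?thesis .
qed

lemma desc_Suc: "desc_prod f (Suc j) = f (Suc j) * desc_prod f j"
  unfolding desc_prod_def by simp

lemma spow_desc: "k + 2 \<le> J \<Longrightarrow> J < n \<Longrightarrow>
   spow sigma sigmai d J * desc_prod (spow sigma sigmai d') k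
   = desc_prod (spow sigma sigmai d') k * spow sigma sigmai d J"
  unfolding desc_prod_def
proof (rule commute_prod_list)
  assume a: "k + 2 \<le> J" "J < n"
  show "\<forall>y\<in>set (map (spow sigma sigmai d') (rev [1..<Suc k])).
          spow sigma sigmai d J * y = y * spow sigma sigmai d J"
  proof
    fix y assume "y \<in> set (map (spow sigma sigmai d') (rev [1..<Suc k]))"
    then obtain i where i: "1 \<le> i" "i \<le> k" "y = spow sigma sigmai d' i" by auto
    have "1 \<le> i" "i < n" "1 \<le> J" "J < n" "i + 1 < J" using i a by auto
    from spow_comm[OF this, of d' d] show "spow sigma sigmai d J * y = y * spow sigma sigmai d J"
      using i by simp
  qed
qed

lemma spow_X: "2 \<le> J \<Longrightarrow> J < n \<Longrightarrow>
   spow sigma sigmai d J * (tpow tau taui alpha * asc_prod sigma n)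
   = (tpow tau taui alpha * asc_prod sigma n) * spow sigma sigmai d (J - 1)"
proof -
  assume a: "2 \<le> J" "J < n"
  let ?T = "tpow tau taui alpha" and ?A = "asc_prod sigma n"
  have "spow sigma sigmai d J * (?T * ?A) = sigma J * ?T * ?A - dd d * (?T * ?A)"
    using spow_eq[of J d] a by (simp add: left_diff_distrib mult.assoc)
  also have "sigma J * ?T * ?A = ?T * (sigma J * ?A)"
    using sigma_tpow[of J alpha] a by (simp add: mult.assoc)
  also have "\<dots> = ?T * ?A * sigma (J-1)" using sigma_asc[OF a] by (simp add: mult.assoc)
  also have "dd d * (?T * ?A) = (?T * ?A) * dd d" by (rule dd_central)
  also have "?T * ?A * sigma (J - 1) - ?T * ?A * dd d = (?T * ?A) * (sigma (J-1) - dd d)"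
    by (simp add: right_diff_distrib)
  also have "sigma (J-1) - dd d = spow sigma sigmai d (J - 1)" using spow_eq[of "J-1" d] a by simp
  finally show ?thesis .
qed

lemma Sc_W: "a \<in> Sc \<Longrightarrow> a \<in> W" by (rule Wtilde.W_sc)

lemma spow_W: "1 \<le> i \<Longrightarrow> i + 2 \<le> n \<Longrightarrow> spow sigma sigmai d i \<in> W"
proof -
  assume a: "1 \<le> i" "i + 2 \<le> n"
  have s: "sigma i \<in> W" using a by (rule Wtilde.W_sigma)
  have m: "qi - q \<in> W" using mc0_Sc Sc_W by simp
  show ?thesis
  proof (cases "d = 1")
    case True
    then show ?thesis using s unfolding spow_def by simp
  next
    case False
    have "sigma i + (qi - q) \<in> W" using s m by (rule Wtilde.W_add)
    moreover have "sigma i + (qi - q) = sigma i - c0" by (simp add: algebra_simps)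
    ultimately show ?thesis using False sigmai_eq[of i] a unfolding spow_def by simp
  qed
qed

definition cmb :: "int \<Rightarrow> int \<Rightarrow> nat \<Rightarrow> _" where
 "cmb d alpha j = {x. \<exists>(K::nat) a k wk. (\<forall>l<K. a l \<in> Sc \<and> k l < j \<and> wk l \<in> W) \<and>
    x = (\<Sum>l<K. a l * (desc_prod (spow sigma sigmai d) (k l) * tpow tau taui alpha
                              * asc_prod sigma n * wk l))}"

lemma comb_zero: "0 \<in> cmb d alpha j"
  unfolding cmb_def by (rule CollectI, rule exI[of _ 0]) simp

lemma comb_single: "a \<in> Sc \<Longrightarrow> k < j \<Longrightarrow> w \<in> W \<Longrightarrow>
  a * (desc_prod (spow sigma sigmai d) k * tpow tau taui alpha * asc_prod sigma n * w) \<in> cmb d alpha j"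
  unfolding cmb_def
  by (rule CollectI, rule exI[of _ 1], rule exI[of _ "\<lambda>_. a"], rule exI[of _ "\<lambda>_. k"],
      rule exI[of _ "\<lambda>_. w"]) simp

lemma comb_add: "x \<in> cmb d alpha j \<Longrightarrow> y \<in> cmb d alpha j \<Longrightarrow> x + y \<in> cmb d alpha j"
proof -
  assume "x \<in> cmb d alpha j" "y \<in> cmb d alpha j"
  then obtain K1 a1 k1 w1 K2 a2 k2 w2 where
    h1: "\<forall>l<(K1::nat). a1 l \<in> Sc \<and> k1 l < j \<and> w1 l \<in> W"
    "x = (\<Sum>l<K1. a1 l * (desc_prod (spow sigma sigmai d) (k1 l) * tpow tau taui alpha
                              * asc_prod sigma n * w1 l))" and
    h2: "\<forall>l<(K2::nat). a2 l \<in> Sc \<and> k2 l < j \<and> w2 l \<in> W"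
    "y = (\<Sum>l<K2. a2 l * (desc_prod (spow sigma sigmai d) (k2 l) * tpow tau taui alpha
                              * asc_prod sigma n * w2 l))"
    unfolding cmb_def by blast
  define a where "a l = (if l < K1 then a1 l else a2 (l - K1))" for l
  define k where "k l = (if l < K1 then k1 l else k2 (l - K1))" for l
  define w where "w l = (if l < K1 then w1 l else w2 (l - K1))" for l
  let ?f = "\<lambda>l. a l * (desc_prod (spow sigma sigmai d) (k l) * tpow tau taui alpha
                              * asc_prod sigma n * w l)"
  have "x + y = (\<Sum>l<K1+K2. ?f l)"
    unfolding sum_split_concat h1(2) h2(2) by (simp add: a_def k_def w_def)
  moreover have "\<forall>l<K1+K2. a l \<in> Sc \<and> k l < j \<and> w l \<in> W"
    using h1(1) h2(1) unfolding a_def k_def w_def by auto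
  ultimately show ?thesis unfolding cmb_def by blast
qed

lemma term_move:
  assumes "k + 2 \<le> J" "J < n" "a \<in> Sc"
  shows "spow sigma sigmai d' J * (a * (desc_prod (spow sigma sigmai d) k * tpow tau taui alpha
                              * asc_prod sigma n * w))
   = a * (desc_prod (spow sigma sigmai d) k * tpow tau taui alpha
                              * asc_prod sigma n * (spow sigma sigmai d' (J - 1) * w))"
proof -
  let ?S = "spow sigma sigmai d' J" and ?D = "desc_prod (spow sigma sigmai d) k"
    and ?X = "tpow tau taui alpha * asc_prod sigma n"
  have "?S * (a * (?D * ?X * w)) = a * ((?S * ?D) * ?X * w)"
    using sc_central[OF assms(3), of ?S] by (simp add: mult.assoc[symmetric])
  also have "?S * ?D = ?D * ?S" using spow_desc assms by blast
  also have "?D * ?S * ?X * w = ?D * (?S * ?X) * w" by (simp add: mult.assoc)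
  also have "?S * ?X = ?X * spow sigma sigmai d' (J - 1)" using spow_X assms by simp
  finally show ?thesis by (simp add: mult.assoc)
qed

lemma comb_left: "x \<in> cmb d alpha j \<Longrightarrow> Suc j < n \<Longrightarrow>
   spow sigma sigmai d' (Suc j) * x \<in> cmb d alpha (Suc j)"
proof -
  assume x: "x \<in> cmb d alpha j" and jn: "Suc j < n"
  then obtain K a k wk where
    h: "\<forall>l<(K::nat). a l \<in> Sc \<and> k l < j \<and> wk l \<in> W"
    "x = (\<Sum>l<K. a l * (desc_prod (spow sigma sigmai d) (k l) * tpow tau taui alpha
                              * asc_prod sigma n * wk l))"
    unfolding cmb_def by blast
  define w' where "w' l = spow sigma sigmai d' j * wk l" for l
  have "spow sigma sigmai d' (Suc j) * x = (\<Sum>l<K. a l * (desc_prod (spow sigma sigmai d) (k l) * tpow tau taui alpha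
                              * asc_prod sigma n * w' l))"
    unfolding h(2) sum_distrib_left
  proof (rule sum.cong[OF refl])
    fix l assume "l \<in> {..<K}"
    then have "k l + 2 \<le> Suc j" "a l \<in> Sc" using h(1) by auto
    from term_move[OF this(1) jn this(2)] show "spow sigma sigmai d' (Suc j) *
         (a l * (desc_prod (spow sigma sigmai d) (k l) * tpow tau taui alpha * asc_prod sigma n * wk l)) =
         a l * (desc_prod (spow sigma sigmai d) (k l) * tpow tau taui alpha * asc_prod sigma n * w' l)"
      unfolding w'_def by simp
  qed
  moreover have "\<forall>l<K. a l \<in> Sc \<and> k l < Suc j \<and> w' l \<in> W"
  proof (intro allI impI)
    fix l assume l: "l < K"
    have "1 \<le> j" "j + 2 \<le> n" using h(1) l jn by auto
    then have "spow sigma sigmai d' j \<in> W" by (rule spow_W)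
    then show "a l \<in> Sc \<and> k l < Suc j \<and> w' l \<in> W"
      using h(1) l unfolding w'_def by (auto intro: Wtilde.W_mult)
  qed
  ultimately show ?thesis unfolding cmb_def by blast
qed

lemma main_lemma:
  assumes e: "e = 1 \<or> e = -1" and w: "w \<in> W"
  shows "j < n \<Longrightarrow> \<exists>y\<in>cmb (-e) alpha j.
     desc_prod (spow sigma sigmai e) j * tpow tau taui alpha * asc_prod sigma n * w
     = desc_prod (spow sigma sigmai (-e)) j * tpow tau taui alpha * asc_prod sigma n * w + y"
proof (induction j)
  case 0
  show ?case using comb_zero unfolding desc_prod_def by fastforce
next
  case (Suc j)
  let ?T = "tpow tau taui alpha" and ?A = "asc_prod sigma n"
  let ?Dp = "desc_prod (spow sigma sigmai e)" and ?Dm = "desc_prod (spow sigma sigmai (-e))"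
  let ?Sp = "spow sigma sigmai e (Suc j)" and ?Sm = "spow sigma sigmai (-e) (Suc j)"
  from Suc obtain y where y: "y \<in> cmb (-e) alpha j"
    "?Dp j * ?T * ?A * w = ?Dm j * ?T * ?A * w + y" by auto
  define c where "c = (if e = 1 then c0 else - c0)"
  have cSc: "c \<in> Sc" unfolding c_def using c0_Sc mc0_Sc by simp
  have sp: "?Sp = ?Sm + c"
    using spow_eq[of "Suc j" e] spow_eq[of "Suc j" "-e"] Suc.prems e
    unfolding c_def dd_def by auto
  have "?Dp (Suc j) * ?T * ?A * w = ?Sp * (?Dp j * ?T * ?A * w)"
    by (simp add: desc_Suc mult.assoc)
  also have "\<dots> = ?Sp * (?Dm j * ?T * ?A * w) + ?Sp * y" using y(2) by (simp add: distrib_left)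
  also have "?Sp * (?Dm j * ?T * ?A * w) = ?Dm (Suc j) * ?T * ?A * w + c * (?Dm j * ?T * ?A * w)"
    unfolding sp by (simp add: distrib_right desc_Suc mult.assoc)
  finally have eq: "?Dp (Suc j) * ?T * ?A * w = ?Dm (Suc j) * ?T * ?A * w + (c * (?Dm j * ?T * ?A * w) + ?Sp * y)"
    by (simp add: add.assoc)
  have "c * (?Dm j * ?T * ?A * w) + ?Sp * y \<in> cmb (-e) alpha (Suc j)"
    by (intro comb_add comb_single cSc w comb_left y(1) Suc.prems) simp
  thus ?case using eq by blast
qed

end

theorem mainTheorem7:
  fixes m :: enat and n j :: nat and e alpha :: int
    and cs :: "complex \<Rightarrow> 'a::ring_1" and q qi tau taui w :: 'a
    and v vi sigma sigmai :: "nat \<Rightarrow> 'a"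
  assumes "0 < m" and "1 \<le> n"
    and "hecke_rels m n cs q qi v vi tau taui sigma sigmai"
    and "e = 1 \<or> e = -1"
    and "j < n" and "alpha \<in> Eset m"
    and "w \<in> Wtilde m n cs q qi v vi tau taui sigma"
  shows "\<exists>(K::nat) (a::nat \<Rightarrow> 'a) (k::nat \<Rightarrow> nat) (wk::nat \<Rightarrow> 'a).
           (\<forall>l<K. a l \<in> scalars m cs q qi v vi \<and> k l < j
                   \<and> wk l \<in> Wtilde m n cs q qi v vi tau taui sigma) \<and>
           desc_prod (spow sigma sigmai e) j * tpow tau taui alpha * asc_prod sigma n * w
           = desc_prod (spow sigma sigmai (- e)) j * tpow tau taui alpha * asc_prod sigma n * w
             + (\<Sum>l<K. a l * (desc_prod (spow sigma sigmai (- e)) (k l) * tpow tau taui alpha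
                              * asc_prod sigma n * wk l))"
proof -
  interpret hk m n cs q qi tau taui v vi sigma sigmai using assms(3) by unfold_locales
  from main_lemma[OF assms(4) assms(7) assms(5), of alpha] obtain y where
    "y \<in> cmb (-e) alpha j"
    "desc_prod (spow sigma sigmai e) j * tpow tau taui alpha * asc_prod sigma n * w
     = desc_prod (spow sigma sigmai (-e)) j * tpow tau taui alpha * asc_prod sigma n * w + y" by blast
  thus ?thesis unfolding cmb_def by blast
qed

end
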